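(* Let $\Omega\subset\mathbb{R}^d$ be a bounded domain and $\mu$ a positive finite Borel measure on $\mathbb{R}^d$ with $\operatorname{supp}(\mu)\subset\overline\Omega$ and $\mu(\Omega)>0$, and assume (MPI) holds. If $u\in C(\Omega)$ is a $\mu$-harmonic function on $\Omega$ and $u$ vanishes on $\partial\Omega$, then $u\equiv0$.
   Context: (MPI): there is $C>0$ with $\int_\Omega|u|^2\,d\mu\le C\int_\Omega|\nabla u|^2\,d\boldsymbol{x}$ for all $u\in C_c^\infty(\Omega)$. Under (MPI), each $u\in H_0^1(\Omega)$ has a unique $L^2(\Omega,\mu)$-representative (the $L^2(\mu)$-limit of $C_c^\infty(\Omega)$ approximants in $H_0^1$); let $\mathcal N$ be the set of $u\in H_0^1(\Omega)$ with zero representative and $\mathcal N^\perp$ its orthogonal complement in $H_0^1(\Omega)$. $\Delta_\mu$ is defined by: $u\in\operatorname{Dom}(\Delta_\mu)$, $-\Delta_\mu u=f$ iff $u\in\mathcal N^\perp$, $f\in L^2(\Omega,\mu)$, and $\int_\Omega\nabla u\cdot\nabla\varphi\,d\boldsymbol{x}=\int_\Omega f\varphi\,d\mu$ for all $\varphi\in C_c^\infty(\Omega)$. A function $u$ is $\mu$-harmonic if $u\in\operatorname{Dom}(\Delta_\mu)$ and $\Delta_\mu u=0$. *)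

theory Defs
  imports "HOL-Analysis.Analysis"
begin

coinductive smooth_fun :: "('a::euclidean_space \<Rightarrow> real) \<Rightarrow> bool" where
  "(\<And>x. f differentiable (at x)) \<Longrightarrow> (\<And>v. smooth_fun (\<lambda>x. frechet_derivative f (at x) v))
    \<Longrightarrow> smooth_fun f"

definition test_fun :: "'a::euclidean_space set \<Rightarrow> ('a \<Rightarrow> real) \<Rightarrow> bool" where
  "test_fun \<Omega> \<phi> \<longleftrightarrow> smooth_fun \<phi> \<and> compact (closure {x. \<phi> x \<noteq> 0})
      \<and> closure {x. \<phi> x \<noteq> 0} \<subseteq> \<Omega>"

definition grad :: "('a::euclidean_space \<Rightarrow> real) \<Rightarrow> 'a \<Rightarrow> 'a" where
  "grad \<phi> x = (\<Sum>b\<in>Basis. frechet_derivative \<phi> (at x) b *\<^sub>R b)"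

definition measure_support :: "'a::metric_space measure \<Rightarrow> 'a set" where
  "measure_support \<mu> = {x. \<forall>e>0. emeasure \<mu> (ball x e) > 0}"

definition MPI :: "'a::euclidean_space set \<Rightarrow> 'a measure \<Rightarrow> bool" where
  "MPI \<Omega> \<mu> \<longleftrightarrow> (\<exists>C>0. \<forall>\<phi>. test_fun \<Omega> \<phi> \<longrightarrow>
     (\<integral>\<^sup>+x\<in>\<Omega>. ennreal ((\<phi> x)\<^sup>2) \<partial>\<mu>)
       \<le> ennreal C * (\<integral>\<^sup>+x\<in>\<Omega>. ennreal ((norm (grad \<phi> x))\<^sup>2) \<partial>lebesgue))"

text \<open>An element of H_0^1(Omega), represented by a function u on Omega together with its
  weak gradient g: both are L^2(Omega)-limits of phi_n, grad phi_n for test functions phi_n.\<close>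
definition H01_approx ::
  "'a::euclidean_space set \<Rightarrow> ('a \<Rightarrow> real) \<Rightarrow> ('a \<Rightarrow> 'a) \<Rightarrow> (nat \<Rightarrow> 'a \<Rightarrow> real) \<Rightarrow> bool" where
  "H01_approx \<Omega> u g \<phi> \<longleftrightarrow>
     (\<lambda>x. indicator \<Omega> x * u x) \<in> borel_measurable lebesgue \<and>
     (\<lambda>x. indicator \<Omega> x *\<^sub>R g x) \<in> borel_measurable lebesgue \<and>
     (\<forall>n. test_fun \<Omega> (\<phi> n)) \<and>
     (\<lambda>n. \<integral>\<^sup>+x\<in>\<Omega>. ennreal ((\<phi> n x - u x)\<^sup>2) \<partial>lebesgue) \<longlonglongrightarrow> 0 \<and>
     (\<lambda>n. \<integral>\<^sup>+x\<in>\<Omega>. ennreal ((norm (grad (\<phi> n) x - g x))\<^sup>2) \<partial>lebesgue) \<longlonglongrightarrow> 0"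

definition H01 :: "'a::euclidean_space set \<Rightarrow> ('a \<Rightarrow> real) \<Rightarrow> ('a \<Rightarrow> 'a) \<Rightarrow> bool" where
  "H01 \<Omega> u g \<longleftrightarrow> (\<exists>\<phi>. H01_approx \<Omega> u g \<phi>)"

text \<open>v is the L^2(Omega, mu)-representative of the H_0^1 element (u,g): the L^2(mu)-limit
  of the test-function approximants.\<close>
definition mu_rep :: "'a::euclidean_space set \<Rightarrow> 'a measure \<Rightarrow> ('a \<Rightarrow> real) \<Rightarrow> ('a \<Rightarrow> 'a)
    \<Rightarrow> ('a \<Rightarrow> real) \<Rightarrow> bool" where
  "mu_rep \<Omega> \<mu> u g v \<longleftrightarrow> (\<exists>\<phi>. H01_approx \<Omega> u g \<phi> \<and>
     (\<lambda>x. indicator \<Omega> x * v x) \<in> borel_measurable \<mu> \<and>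
     (\<lambda>n. \<integral>\<^sup>+x\<in>\<Omega>. ennreal ((\<phi> n x - v x)\<^sup>2) \<partial>\<mu>) \<longlonglongrightarrow> 0)"

definition in_N :: "'a::euclidean_space set \<Rightarrow> 'a measure \<Rightarrow> ('a \<Rightarrow> real) \<Rightarrow> ('a \<Rightarrow> 'a) \<Rightarrow> bool" where
  "in_N \<Omega> \<mu> u g \<longleftrightarrow> H01 \<Omega> u g \<and> mu_rep \<Omega> \<mu> u g (\<lambda>_. 0)"

definition in_N_perp :: "'a::euclidean_space set \<Rightarrow> 'a measure \<Rightarrow> ('a \<Rightarrow> real) \<Rightarrow> ('a \<Rightarrow> 'a) \<Rightarrow> bool" where
  "in_N_perp \<Omega> \<mu> u g \<longleftrightarrow> H01 \<Omega> u g \<and>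
     (\<forall>w gw. in_N \<Omega> \<mu> w gw \<longrightarrow> (LINT x:\<Omega>|lebesgue. g x \<bullet> gw x) = 0)"

text \<open>u \<in> Dom(Delta_mu) and -Delta_mu u = f (u given with its weak gradient g).\<close>
definition neg_mu_laplacian :: "'a::euclidean_space set \<Rightarrow> 'a measure \<Rightarrow> ('a \<Rightarrow> real) \<Rightarrow> ('a \<Rightarrow> 'a)
    \<Rightarrow> ('a \<Rightarrow> real) \<Rightarrow> bool" where
  "neg_mu_laplacian \<Omega> \<mu> u g f \<longleftrightarrow> in_N_perp \<Omega> \<mu> u g \<and>
     (\<lambda>x. indicator \<Omega> x * f x) \<in> borel_measurable \<mu> \<and>
     (\<integral>\<^sup>+x\<in>\<Omega>. ennreal ((f x)\<^sup>2) \<partial>\<mu>) < \<infinity> \<and>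
     (\<forall>\<phi>. test_fun \<Omega> \<phi> \<longrightarrow>
        (LINT x:\<Omega>|lebesgue. g x \<bullet> grad \<phi> x) = (LINT x:\<Omega>|\<mu>. f x * \<phi> x))"

definition mu_harmonic :: "'a::euclidean_space set \<Rightarrow> 'a measure \<Rightarrow> ('a \<Rightarrow> real) \<Rightarrow> bool" where
  "mu_harmonic \<Omega> \<mu> u \<longleftrightarrow> (\<exists>g. neg_mu_laplacian \<Omega> \<mu> u g (\<lambda>_. 0))"

end

theory Submission
  imports Defs
begin

lemma smooth_diff: "smooth_fun f \<Longrightarrow> f differentiable (at x)"
  by (erule smooth_fun.cases) auto

lemma smooth_deriv: "smooth_fun f \<Longrightarrow> smooth_fun (\<lambda>x. frechet_derivative f (at x) v)"
  by (erule smooth_fun.cases) auto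

lemma smooth_cont: "smooth_fun f \<Longrightarrow> continuous_on UNIV f"
  by (meson continuous_at_imp_continuous_on differentiable_imp_continuous_within smooth_diff)

lemma frechet_grad:
  assumes "f differentiable (at x)"
  shows "frechet_derivative f (at x) v = grad f x \<bullet> v"
proof -
  have lin: "linear (frechet_derivative f (at x))"
    using assms frechet_derivative_works has_derivative_linear by blast
  have "frechet_derivative f (at x) v = frechet_derivative f (at x) (\<Sum>b\<in>Basis. (v \<bullet> b) *\<^sub>R b)"
    by (simp add: euclidean_representation)
  also have "\<dots> = (\<Sum>b\<in>Basis. (v \<bullet> b) * frechet_derivative f (at x) b)"
    using lin by (simp add: linear_sum linear_scale)
  also have "\<dots> = grad f x \<bullet> v"
    by (simp add: grad_def inner_sum_right inner_commute mult.commute)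
  finally show ?thesis .
qed

lemma smooth_grad_cont: "smooth_fun f \<Longrightarrow> continuous_on UNIV (grad f)"
proof -
  assume f: "smooth_fun f"
  have c: "continuous_on UNIV (\<lambda>x. frechet_derivative f (at x) b)" for b
    using smooth_cont[OF smooth_deriv[OF f]] .
  show ?thesis unfolding grad_def
    by (intro continuous_intros c)
qed

lemma test_zero: "test_fun \<Omega> \<phi> \<Longrightarrow> x \<notin> \<Omega> \<Longrightarrow> \<phi> x = 0"
  unfolding test_fun_def by (metis (mono_tags) closure_subset mem_Collect_eq subsetD)

lemma test_grad_zero:
  assumes "test_fun \<Omega> \<phi>" "x \<notin> \<Omega>"
  shows "grad \<phi> x = 0"
proof -
  let ?K = "closure {x. \<phi> x \<noteq> 0}"
  have K: "?K \<subseteq> \<Omega>" "smooth_fun \<phi>" using assms(1) unfolding test_fun_def by auto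
  have "x \<in> - ?K" using K assms(2) by auto
  have "((\<lambda>_. 0) has_derivative (\<lambda>_. 0)) (at x)" by simp
  then have "(\<phi> has_derivative (\<lambda>_. 0)) (at x)"
    apply (rule has_derivative_transform_within_open[where s="- ?K"])
    using \<open>x \<in> - ?K\<close> apply auto by (metis (mono_tags) closure_subset mem_Collect_eq subsetD)
  then have "frechet_derivative \<phi> (at x) = (\<lambda>_. 0)"
    using frechet_derivative_at by metis
  then show ?thesis by (simp add: grad_def)
qed


lemma deriv_line:
  assumes "f differentiable (at (l *\<^sub>R x))"
  shows "((\<lambda>l. f (l *\<^sub>R x)) has_field_derivative (grad f (l *\<^sub>R x) \<bullet> x)) (at l)"
proof -
  let ?D = "frechet_derivative f (at (l *\<^sub>R x))"
  have d: "(f has_derivative ?D) (at (l *\<^sub>R x))"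
    using assms frechet_derivative_works by blast
  have "((\<lambda>l. l *\<^sub>R x) has_derivative (\<lambda>h. h *\<^sub>R x)) (at l)"
    by (auto intro!: derivative_eq_intros)
  then have "((\<lambda>l. f (l *\<^sub>R x)) has_derivative (\<lambda>h. ?D (h *\<^sub>R x))) (at l)"
    using has_derivative_compose[of "\<lambda>l. l *\<^sub>R x" "\<lambda>h. h *\<^sub>R x" l UNIV f ?D] d by simp
  moreover have "(\<lambda>h. ?D (h *\<^sub>R x)) = (*) (grad f (l *\<^sub>R x) \<bullet> x)"
  proof
    fix h
    have "linear ?D" using d has_derivative_linear by blast
    then have "?D (h *\<^sub>R x) = h * ?D x" by (simp add: linear_scale)
    then show "?D (h *\<^sub>R x) = (grad f (l *\<^sub>R x) \<bullet> x) * h"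
      using frechet_grad[OF assms] by simp
  qed
  ultimately show ?thesis by (simp add: has_field_derivative_def)
qed

lemma box_sym: "x \<in> cbox ((-r) *\<^sub>R One) (r *\<^sub>R One) \<longleftrightarrow> (\<forall>i\<in>Basis. \<bar>x \<bullet> i\<bar> \<le> r)"
  by (auto simp: mem_box abs_le_iff)

lemma norm_in_box: "norm x \<le> r \<Longrightarrow> x \<in> cbox ((-r) *\<^sub>R One) (r *\<^sub>R One)"
  unfolding box_sym using Basis_le_norm order_trans by blast

lemma box_mono: "r \<le> s \<Longrightarrow> cbox ((-r) *\<^sub>R One) (r *\<^sub>R One) \<subseteq> cbox ((-s) *\<^sub>R (One::'a::euclidean_space)) (s *\<^sub>R One)"
  unfolding box_sym subset_iff by force

lemma amgm: fixes a b e :: real assumes "e > 0" shows "2*a*b \<le> e*a^2 + b^2/e"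
proof -
  have "0 \<le> (e*a - b)^2/e" using assms by simp
  also have "(e*a - b)^2/e = e*a^2 + b^2/e - 2*a*b"
    using assms by (simp add: power2_eq_square field_simps)
  finally show ?thesis by simp
qed


lemma poincare_HK:
  fixes \<phi> :: "'a::euclidean_space \<Rightarrow> real"
  assumes T: "test_fun \<Omega> \<phi>" and R: "R > 0" and OR: "\<Omega> \<subseteq> ball 0 R"
  shows "integral (cbox ((-3*R) *\<^sub>R One) ((3*R) *\<^sub>R One)) (\<lambda>x. (\<phi> x)^2)
     \<le> (4*R^2/(real DIM('a))^2) * integral (cbox ((-3*R) *\<^sub>R One) ((3*R) *\<^sub>R One)) (\<lambda>x. (norm (grad \<phi> x))^2)"
proof -
  define A where "A = (-3*R) *\<^sub>R (One::'a)"
  define B where "B = (3*R) *\<^sub>R (One::'a)"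
  define d where "d = real DIM('a)"
  have d: "d > 0" unfolding d_def by simp
  have sm: "smooth_fun \<phi>" using T test_fun_def by auto
  have c\<phi>: "continuous_on UNIV \<phi>" by (rule smooth_cont[OF sm])
  have cg: "continuous_on UNIV (grad \<phi>)" by (rule smooth_grad_cont[OF sm])
  have supp: "norm x < R" if "\<phi> x \<noteq> 0" for x
    using test_zero[OF T, of x] OR that by (auto simp: subset_iff)
  define I where "I = integral (cbox ((-R) *\<^sub>R One) (R *\<^sub>R (One::'a))) (\<lambda>x. (\<phi> x)^2)"
  have c\<phi>2: "continuous_on S (\<lambda>x. (\<phi> x)^2)" for S
    by (intro continuous_intros continuous_on_subset[OF c\<phi>]) auto
  have hI: "((\<lambda>x. (\<phi> x)^2) has_integral I) (cbox ((-R) *\<^sub>R One) (R *\<^sub>R (One::'a)))"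
    unfolding I_def by (rule integrable_integral, rule integrable_continuous, rule c\<phi>2)
  have hl: "((\<lambda>x. (\<phi> (l *\<^sub>R x))^2) has_integral I / l^DIM('a)) (cbox A B)" if l: "l > 1/3" for l
  proof -
    have e1: "((-R) *\<^sub>R One - 0) /\<^sub>R l = (-(R/l)) *\<^sub>R (One::'a)"
      "(R *\<^sub>R One - 0) /\<^sub>R l = (R/l) *\<^sub>R (One::'a)"
      by (simp_all add: divide_inverse mult.commute)
    have "((\<lambda>x. (\<phi> (l *\<^sub>R x + 0))^2) has_integral I /\<^sub>R l^DIM('a))
       (cbox (((-R) *\<^sub>R One - 0) /\<^sub>R l) ((R *\<^sub>R One - 0) /\<^sub>R l))"
      using has_integral_affinity'[OF hI, of l 0] l by simp
    then have h: "((\<lambda>x. (\<phi> (l *\<^sub>R x))^2) has_integral I / l^DIM('a)) (cbox ((-(R/l)) *\<^sub>R One) ((R/l) *\<^sub>R One))"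
      unfolding e1 by (simp add: divide_inverse mult.commute)
    show ?thesis
    proof (rule has_integral_on_superset[OF h])
      fix x assume x: "x \<notin> cbox ((-(R/l)) *\<^sub>R One) ((R/l) *\<^sub>R (One::'a))"
      show "(\<phi> (l *\<^sub>R x))^2 = 0"
      proof (rule ccontr)
        assume "(\<phi> (l *\<^sub>R x))^2 \<noteq> 0"
        then have "\<phi> (l *\<^sub>R x) \<noteq> 0" by simp
        from supp[OF this] have "norm (l *\<^sub>R x) < R" .
        then have "norm x \<le> R/l" using l by (simp add: field_simps)
        then show False using norm_in_box x by blast
      qed
    next
      show "cbox ((-(R/l)) *\<^sub>R One) ((R/l) *\<^sub>R One) \<subseteq> cbox A B"
      proof -
        have "R/l \<le> 3*R" using l R by (simp add: field_simps)
        from box_mono[OF this] show ?thesis unfolding A_def B_def by simp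
      qed
    qed
  qed
  have hI': "((\<lambda>x. (\<phi> x)^2) has_integral I) (cbox A B)" using hl[of 1] by simp
  define f where "f l x = (\<phi> (l *\<^sub>R x))^2" for l x
  define fx where "fx l x = 2 * (grad \<phi> (l *\<^sub>R x) \<bullet> x) * \<phi> (l *\<^sub>R x)" for l x
  define U where "U = ball (1::real) (1/2)"
  have deriv: "((\<lambda>l. integral (cbox A B) (f l)) has_field_derivative integral (cbox A B) (fx 1)) (at 1 within U)"
  proof (rule leibniz_rule_field_derivative)
    fix l x assume "l \<in> U" "x \<in> cbox A B"
    have "((\<lambda>l. \<phi> (l *\<^sub>R x)) has_field_derivative (grad \<phi> (l *\<^sub>R x) \<bullet> x)) (at l)"
      by (rule deriv_line[OF smooth_diff[OF sm]])
    from DERIV_power[OF this, of 2]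
    show "((\<lambda>l. f l x) has_field_derivative fx l x) (at l within U)"
      unfolding f_def fx_def by (auto intro: has_field_derivative_at_within simp: mult.commute mult.left_commute)
  next
    fix l assume "l \<in> U"
    show "f l integrable_on cbox A B" unfolding f_def
      by (rule integrable_continuous) (intro continuous_intros continuous_on_compose2[OF c\<phi>], auto)
  next
    show "continuous_on (U \<times> cbox A B) (\<lambda>(l, x). fx l x)"
      unfolding fx_def split_beta
      by (intro continuous_intros continuous_on_compose2[OF c\<phi>] continuous_on_compose2[OF cg]) auto
  next
    show "1 \<in> U" "convex U" unfolding U_def by auto
  qed
  have eqU: "integral (cbox A B) (f l) = I / l^DIM('a)" if "l \<in> U" for l
  proof -
    have "l > 1/3" using that unfolding U_def by (auto simp: dist_real_def abs_if split: if_splits)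
    from integral_unique[OF hl[OF this]] show ?thesis unfolding f_def .
  qed
  have G: "((\<lambda>l. I / l^DIM('a)) has_field_derivative (- d * I)) (at 1)"
    by (auto intro!: derivative_eq_intros simp: d_def)
  have "((\<lambda>l. integral (cbox A B) (f l)) has_field_derivative (- d * I)) (at 1)"
    by (rule has_field_derivative_transform_within_open[OF G, of U]) (auto simp: U_def eqU)
  moreover have "((\<lambda>l. integral (cbox A B) (f l)) has_field_derivative integral (cbox A B) (fx 1)) (at 1)"
    using deriv at_within_open[of 1 U] U_def by auto
  ultimately have key: "integral (cbox A B) (fx 1) = - d * I" using DERIV_unique by blast
  have fx1: "fx 1 = (\<lambda>x. 2 * (grad \<phi> x \<bullet> x) * \<phi> x)" unfolding fx_def by auto
  define J where "J = integral (cbox A B) (\<lambda>x. (norm (grad \<phi> x))^2)"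
  have hJ: "((\<lambda>x. (norm (grad \<phi> x))^2) has_integral J) (cbox A B)"
    unfolding J_def by (rule integrable_integral, rule integrable_continuous)
      (intro continuous_intros continuous_on_subset[OF cg], auto)
  have hF: "(fx 1 has_integral (- d * I)) (cbox A B)"
    unfolding key[symmetric] fx1
    by (rule integrable_integral, rule integrable_continuous)
      (intro continuous_intros continuous_on_subset[OF cg] continuous_on_subset[OF c\<phi>], auto)
  have pt: "- fx 1 x \<le> (d/2) * (\<phi> x)^2 + (2*R^2/d) * (norm (grad \<phi> x))^2" for x
  proof (cases "\<phi> x = 0")
    case True then show ?thesis using d by (simp add: fx_def)
  next
    case False
    then have nx: "norm x < R" using supp by auto
    have "- fx 1 x \<le> 2 * \<bar>\<phi> x\<bar> * (R * norm (grad \<phi> x))"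
    proof -
      have "\<bar>grad \<phi> x \<bullet> x\<bar> \<le> norm (grad \<phi> x) * norm x" by (rule Cauchy_Schwarz_ineq2)
      also have "\<dots> \<le> R * norm (grad \<phi> x)" using nx
        by (metis mult.commute less_imp_le norm_ge_zero mult_right_mono)
      finally have "\<bar>grad \<phi> x \<bullet> x\<bar> \<le> R * norm (grad \<phi> x)" .
      then have m: "2 * \<bar>\<phi> x\<bar> * \<bar>grad \<phi> x \<bullet> x\<bar> \<le> 2 * \<bar>\<phi> x\<bar> * (R * norm (grad \<phi> x))"
        by (intro mult_left_mono) auto
      have "\<bar>fx 1 x\<bar> = 2 * \<bar>\<phi> x\<bar> * \<bar>grad \<phi> x \<bullet> x\<bar>"
        unfolding fx_def by (simp add: abs_mult)
      moreover have "- fx 1 x \<le> \<bar>fx 1 x\<bar>" by linarith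
      ultimately show ?thesis using m by linarith
    qed
    also have "\<dots> \<le> (d/2) * \<bar>\<phi> x\<bar>^2 + (R * norm (grad \<phi> x))^2 / (d/2)"
      using amgm[of "d/2" "\<bar>\<phi> x\<bar>" "R * norm (grad \<phi> x)"] d by simp
    also have "\<dots> = (d/2) * (\<phi> x)^2 + (2*R^2/d) * (norm (grad \<phi> x))^2"
      by (simp add: power_mult_distrib field_simps)
    finally show ?thesis .
  qed
  have "d * I \<le> (d/2) * I + (2*R^2/d) * J"
  proof (rule has_integral_le)
    show "((\<lambda>x. - fx 1 x) has_integral d * I) (cbox A B)"
      using has_integral_neg[OF hF] by simp
    show "((\<lambda>x. (d/2) * (\<phi> x)^2 + (2*R^2/d) * (norm (grad \<phi> x))^2) has_integral (d/2) * I + (2*R^2/d) * J) (cbox A B)"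
      by (intro has_integral_add has_integral_mult_right hI' hJ)
  qed (rule pt)
  then have "(d/2) * I \<le> (2*R^2/d) * J" by linarith
  then have "(2/d) * ((d/2) * I) \<le> (2/d) * ((2*R^2/d) * J)"
    using d by (intro mult_left_mono) auto
  then have "I \<le> (4*R^2/d^2) * J" using d by (simp add: field_simps power2_eq_square)
  moreover have "integral (cbox A B) (\<lambda>x. (\<phi> x)^2) = I" using hI' by (rule integral_unique)
  ultimately show ?thesis unfolding J_def A_def B_def d_def by simp
qed


lemma nn_conv:
  fixes h :: "'a::euclidean_space \<Rightarrow> real"
  assumes c: "continuous_on UNIV h" and nn: "\<And>x. 0 \<le> h x" and z: "\<And>x. x \<notin> \<Omega> \<Longrightarrow> h x = 0"
    and sub: "\<Omega> \<subseteq> cbox a b"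
  shows "(\<integral>\<^sup>+x\<in>\<Omega>. ennreal (h x) \<partial>lebesgue) = ennreal (integral (cbox a b) h)"
proof -
  have "(h has_integral integral (cbox a b) h) (cbox a b)"
    by (rule integrable_integral, rule integrable_continuous, rule continuous_on_subset[OF c]) auto
  then have "(h has_integral integral (cbox a b) h) UNIV"
    by (rule has_integral_on_superset) (use z sub in auto)
  moreover have "(\<lambda>x. if x \<in> \<Omega> then h x else 0) = h" using z by auto
  ultimately have "(h has_integral integral (cbox a b) h) \<Omega>"
    using has_integral_restrict_UNIV[of \<Omega> h] by simp
  from nn_integral_has_integral_lebesgue'[OF nn this]
  show ?thesis by (simp add: nn_integral_completion)
qed

lemma poincare_nn:
  fixes \<phi> :: "'a::euclidean_space \<Rightarrow> real"
  assumes T: "test_fun \<Omega> \<phi>" and R: "R > 0" and OR: "\<Omega> \<subseteq> ball 0 R"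
  shows "(\<integral>\<^sup>+x\<in>\<Omega>. ennreal ((\<phi> x)^2) \<partial>lebesgue)
     \<le> ennreal (4*R^2/(real DIM('a))^2) * (\<integral>\<^sup>+x\<in>\<Omega>. ennreal ((norm (grad \<phi> x))^2) \<partial>lebesgue)"
proof -
  let ?A = "(-3*R) *\<^sub>R (One::'a)" and ?B = "(3*R) *\<^sub>R (One::'a)"
  have sm: "smooth_fun \<phi>" using T test_fun_def by auto
  have c\<phi>: "continuous_on UNIV \<phi>" by (rule smooth_cont[OF sm])
  have cg: "continuous_on UNIV (grad \<phi>)" by (rule smooth_grad_cont[OF sm])
  have sub: "\<Omega> \<subseteq> cbox ?A ?B"
  proof
    fix x assume "x \<in> \<Omega>"
    then have "norm x \<le> 3*R" using OR R by (auto simp: subset_iff)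
    from norm_in_box[OF this] show "x \<in> cbox ?A ?B" by simp
  qed
  have e1: "(\<integral>\<^sup>+x\<in>\<Omega>. ennreal ((\<phi> x)^2) \<partial>lebesgue) = ennreal (integral (cbox ?A ?B) (\<lambda>x. (\<phi> x)^2))"
    by (rule nn_conv[OF _ _ _ sub]) (auto intro!: continuous_intros c\<phi> simp: test_zero[OF T])
  have e2: "(\<integral>\<^sup>+x\<in>\<Omega>. ennreal ((norm (grad \<phi> x))^2) \<partial>lebesgue) = ennreal (integral (cbox ?A ?B) (\<lambda>x. (norm (grad \<phi> x))^2))"
    by (rule nn_conv[OF _ _ _ sub]) (auto intro!: continuous_intros cg simp: test_grad_zero[OF T])
  have J0: "0 \<le> integral (cbox ?A ?B) (\<lambda>x. (norm (grad \<phi> x))^2)"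
    by (rule integral_nonneg) (auto intro!: integrable_continuous continuous_intros continuous_on_subset[OF cg])
  show ?thesis unfolding e1 e2
    using poincare_HK[OF T R OR] J0
    by (simp add: ennreal_mult[symmetric] ennreal_leI)
qed


lemma sq_tri:
  fixes x :: "'b::real_normed_vector"
  assumes "norm x \<le> a + b" "0 \<le> a" "0 \<le> b"
  shows "(norm x)^2 \<le> 2*a^2 + 2*b^2"
proof -
  have "(norm x)^2 \<le> (a+b)^2" using assms by (intro power_mono) auto
  also have "\<dots> \<le> 2*a^2 + 2*b^2"
  proof -
    have "0 \<le> (a-b)^2" by simp
    then show ?thesis by (simp add: power2_eq_square algebra_simps)
  qed
  finally show ?thesis .
qed

lemma nn_bound2:
  fixes F f h :: "'b \<Rightarrow> real"
  assumes fm: "f \<in> borel_measurable N" and hm: "h \<in> borel_measurable N"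
    and nn: "\<And>x. 0 \<le> f x" "\<And>x. 0 \<le> h x"
    and le: "\<And>x. x \<in> space N \<Longrightarrow> F x \<le> 2 * f x + 2 * h x"
  shows "(\<integral>\<^sup>+x. ennreal (F x) \<partial>N) \<le> 2 * (\<integral>\<^sup>+x. ennreal (f x) \<partial>N) + 2 * (\<integral>\<^sup>+x. ennreal (h x) \<partial>N)"
proof -
  have "(\<integral>\<^sup>+x. ennreal (F x) \<partial>N) \<le> (\<integral>\<^sup>+x. 2 * ennreal (f x) + 2 * ennreal (h x) \<partial>N)"
  proof (rule nn_integral_mono)
    fix x assume "x \<in> space N"
    then have "ennreal (F x) \<le> ennreal (2 * f x + 2 * h x)" using le by (intro ennreal_leI) auto
    also have "\<dots> = 2 * ennreal (f x) + 2 * ennreal (h x)"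
      using nn[of x] by (simp add: ennreal_mult)
    finally show "ennreal (F x) \<le> 2 * ennreal (f x) + 2 * ennreal (h x)" .
  qed
  also have "\<dots> = 2 * (\<integral>\<^sup>+x. ennreal (f x) \<partial>N) + 2 * (\<integral>\<^sup>+x. ennreal (h x) \<partial>N)"
    using fm hm by (simp add: nn_integral_add nn_integral_cmult)
  finally show ?thesis .
qed


lemma g_zero:
  fixes g :: "'a::euclidean_space \<Rightarrow> 'a" and \<psi> :: "nat \<Rightarrow> 'a \<Rightarrow> 'a" and N :: "'a measure"
  assumes gM: "g \<in> borel_measurable N"
  and \<psi>M: "\<And>n. \<psi> n \<in> borel_measurable N"
  and \<psi>fin: "\<And>n. (\<integral>\<^sup>+x. ennreal ((norm (\<psi> n x))^2) \<partial>N) < \<infinity>"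
  and lim: "(\<lambda>n. \<integral>\<^sup>+x. ennreal ((norm (\<psi> n x - g x))^2) \<partial>N) \<longlonglongrightarrow> 0"
  and orth: "\<And>n. integral\<^sup>L N (\<lambda>x. g x \<bullet> \<psi> n x) = 0"
  shows "(\<integral>\<^sup>+x. ennreal ((norm (g x))^2) \<partial>N) = 0"
proof -
  define B where "B n = (\<integral>\<^sup>+x. ennreal ((norm (\<psi> n x - g x))^2) \<partial>N)" for n
  have "eventually (\<lambda>n. B n < 1) sequentially"
    using order_tendstoD(2)[OF lim, of 1] unfolding B_def by simp
  then obtain n0 where "\<forall>n\<ge>n0. B n < 1" unfolding eventually_sequentially by blast
  then have n0: "B n0 < 1" by simp
  have int_g: "integrable N (\<lambda>x. (norm (g x))^2)"
  proof (rule integrableI_bounded)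
    show "(\<lambda>x. (norm (g x))^2) \<in> borel_measurable N" using gM by measurable
    have "(\<integral>\<^sup>+x. ennreal (norm ((norm (g x))^2)) \<partial>N) = (\<integral>\<^sup>+x. ennreal ((norm (g x))^2) \<partial>N)" by simp
    also have "\<dots> \<le> 2 * B n0 + 2 * (\<integral>\<^sup>+x. ennreal ((norm (\<psi> n0 x))^2) \<partial>N)"
      unfolding B_def
    proof (rule nn_bound2)
      fix x
      have "norm (g x) = norm (\<psi> n0 x - (\<psi> n0 x - g x))" by simp
      also have "\<dots> \<le> norm (\<psi> n0 x) + norm (\<psi> n0 x - g x)" by (rule norm_triangle_ineq4)
      finally have "norm (g x) \<le> norm (\<psi> n0 x - g x) + norm (\<psi> n0 x)" by linarith
      then show "(norm (g x))^2 \<le> 2 * (norm (\<psi> n0 x - g x))^2 + 2 * (norm (\<psi> n0 x))^2"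
        by (rule sq_tri) auto
    next
      show "(\<lambda>x. (norm (\<psi> n0 x - g x))\<^sup>2) \<in> borel_measurable N" using gM \<psi>M by measurable
      show "(\<lambda>x. (norm (\<psi> n0 x))\<^sup>2) \<in> borel_measurable N" using \<psi>M by measurable
    qed (simp, simp)
    also have "\<dots> < \<infinity>"
    proof -
      have b: "B n0 < \<infinity>" by (rule less_trans[OF n0]) simp
      show ?thesis using b \<psi>fin[of n0] by (simp add: ennreal_mult_less_top)
    qed
    finally show "(\<integral>\<^sup>+x. ennreal (norm ((norm (g x))^2)) \<partial>N) < \<infinity>" .
  qed
  have int_\<psi>: "integrable N (\<lambda>x. (norm (\<psi> n x))^2)" for n
    by (rule integrableI_bounded) (use \<psi>M \<psi>fin in auto)
  have int_d: "integrable N (\<lambda>x. (norm (\<psi> n x - g x))^2)" for n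
  proof (rule Bochner_Integration.integrable_bound)
    show "integrable N (\<lambda>x. 2 * (norm (\<psi> n x))^2 + 2 * (norm (g x))^2)"
      using int_g int_\<psi> by auto
    show "(\<lambda>x. (norm (\<psi> n x - g x))^2) \<in> borel_measurable N" using gM \<psi>M by measurable
    show "AE x in N. norm ((norm (\<psi> n x - g x))^2) \<le> norm (2 * (norm (\<psi> n x))^2 + 2 * (norm (g x))^2)"
    proof (rule AE_I2)
      fix x
      have "(norm (\<psi> n x - g x))^2 \<le> 2 * (norm (\<psi> n x))^2 + 2 * (norm (g x))^2"
        by (rule sq_tri) (auto intro: norm_triangle_ineq4)
      then show "norm ((norm (\<psi> n x - g x))^2) \<le> norm (2 * (norm (\<psi> n x))^2 + 2 * (norm (g x))^2)"
        by simp
    qed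
  qed
  have int_c: "integrable N (\<lambda>x. g x \<bullet> \<psi> n x)" for n
  proof (rule Bochner_Integration.integrable_bound)
    show "integrable N (\<lambda>x. (norm (\<psi> n x))^2 + (norm (g x))^2)"
      using int_g int_\<psi> by auto
    show "(\<lambda>x. g x \<bullet> \<psi> n x) \<in> borel_measurable N" using gM \<psi>M by measurable
    show "AE x in N. norm (g x \<bullet> \<psi> n x) \<le> norm ((norm (\<psi> n x))^2 + (norm (g x))^2)"
    proof (rule AE_I2)
      fix x
      have "\<bar>g x \<bullet> \<psi> n x\<bar> \<le> norm (g x) * norm (\<psi> n x)" by (rule Cauchy_Schwarz_ineq2)
      also have "\<dots> \<le> (norm (\<psi> n x))^2 + (norm (g x))^2"
      proof -
        have "0 \<le> (norm (g x) - norm (\<psi> n x))^2" by simp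
        moreover have "(norm (g x) - norm (\<psi> n x))^2 = (norm (g x))^2 + (norm (\<psi> n x))^2 - 2 * (norm (g x) * norm (\<psi> n x))"
          by (simp add: power2_diff)
        moreover have "0 \<le> (norm (g x))^2" "0 \<le> (norm (\<psi> n x))^2" by simp_all
        ultimately show ?thesis by linarith
      qed
      finally show "norm (g x \<bullet> \<psi> n x) \<le> norm ((norm (\<psi> n x))^2 + (norm (g x))^2)" by simp
    qed
  qed
  define Ig where "Ig = integral\<^sup>L N (\<lambda>x. (norm (g x))^2)"
  have le: "Ig \<le> integral\<^sup>L N (\<lambda>x. (norm (\<psi> n x - g x))^2)" for n
  proof -
    have "Ig = integral\<^sup>L N (\<lambda>x. (norm (g x))^2 - g x \<bullet> \<psi> n x)"
      unfolding Ig_def using int_g int_c orth[of n] by (simp add: Bochner_Integration.integral_diff)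
    also have "\<dots> \<le> integral\<^sup>L N (\<lambda>x. (norm (g x))^2 / 2 + (norm (\<psi> n x - g x))^2 / 2)"
    proof (rule integral_mono)
      show "integrable N (\<lambda>x. (norm (g x))^2 - g x \<bullet> \<psi> n x)" using int_g int_c by auto
      show "integrable N (\<lambda>x. (norm (g x))^2 / 2 + (norm (\<psi> n x - g x))^2 / 2)" using int_g int_d by auto
      fix x
      have p: "0 \<le> \<psi> n x \<bullet> \<psi> n x" by simp
      show "(norm (g x))^2 - g x \<bullet> \<psi> n x \<le> (norm (g x))^2 / 2 + (norm (\<psi> n x - g x))^2 / 2"
      proof -
        have e: "(norm (\<psi> n x - g x))^2 = \<psi> n x \<bullet> \<psi> n x + g x \<bullet> g x - 2 * (g x \<bullet> \<psi> n x)"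
          by (simp add: power2_norm_eq_inner inner_diff_left inner_diff_right inner_commute)
        have e2: "(norm (g x))^2 = g x \<bullet> g x" by (simp add: power2_norm_eq_inner)
        show ?thesis unfolding e e2 using p by (simp add: field_simps)
      qed
    qed
    also have "\<dots> = Ig / 2 + integral\<^sup>L N (\<lambda>x. (norm (\<psi> n x - g x))^2) / 2"
      unfolding Ig_def using int_g int_d by simp
    finally show ?thesis by simp
  qed
  have Bn: "B n = ennreal (integral\<^sup>L N (\<lambda>x. (norm (\<psi> n x - g x))^2))" for n
    unfolding B_def by (rule nn_integral_eq_integral[OF int_d]) simp
  have "ennreal Ig \<le> 0"
  proof (rule LIMSEQ_le_const)
    show "B \<longlonglongrightarrow> 0" using lim unfolding B_def .
    show "\<exists>N. \<forall>n\<ge>N. ennreal Ig \<le> B n" using le Bn by (auto intro: ennreal_leI)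
  qed
  moreover have "(\<integral>\<^sup>+x. ennreal ((norm (g x))^2) \<partial>N) = ennreal Ig"
    unfolding Ig_def by (rule nn_integral_eq_integral[OF int_g]) simp
  ultimately show ?thesis by simp
qed


lemma u_zero:
  fixes u :: "'a::euclidean_space \<Rightarrow> real" and \<phi> :: "nat \<Rightarrow> 'a \<Rightarrow> real"
    and \<psi> :: "nat \<Rightarrow> 'a \<Rightarrow> 'a" and g :: "'a \<Rightarrow> 'a" and N :: "'a measure"
  assumes uM: "u \<in> borel_measurable N" and \<phi>M: "\<And>n. \<phi> n \<in> borel_measurable N"
   and \<psi>M: "\<And>n. \<psi> n \<in> borel_measurable N" and gM: "g \<in> borel_measurable N"
   and Alim: "(\<lambda>n. \<integral>\<^sup>+x. ennreal ((\<phi> n x - u x)^2) \<partial>N) \<longlonglongrightarrow> 0"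
   and Blim: "(\<lambda>n. \<integral>\<^sup>+x. ennreal ((norm (\<psi> n x - g x))^2) \<partial>N) \<longlonglongrightarrow> 0"
   and G0: "(\<integral>\<^sup>+x. ennreal ((norm (g x))^2) \<partial>N) = 0"
   and P: "\<And>n. (\<integral>\<^sup>+x. ennreal ((\<phi> n x)^2) \<partial>N) \<le> ennreal C * (\<integral>\<^sup>+x. ennreal ((norm (\<psi> n x))^2) \<partial>N)"
  shows "(\<integral>\<^sup>+x. ennreal ((u x)^2) \<partial>N) = 0"
proof -
  define A where "A n = (\<integral>\<^sup>+x. ennreal ((\<phi> n x - u x)^2) \<partial>N)" for n
  define B where "B n = (\<integral>\<^sup>+x. ennreal ((norm (\<psi> n x - g x))^2) \<partial>N)" for n
  have le: "(\<integral>\<^sup>+x. ennreal ((u x)^2) \<partial>N) \<le> 2 * A n + 2 * (ennreal C * (2 * B n))" for n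
  proof -
    have 1: "(\<integral>\<^sup>+x. ennreal ((u x)^2) \<partial>N) \<le> 2 * A n + 2 * (\<integral>\<^sup>+x. ennreal ((\<phi> n x)^2) \<partial>N)"
      unfolding A_def
    proof (rule nn_bound2)
      fix x
      have "norm (u x) \<le> norm (\<phi> n x - u x) + norm (\<phi> n x)"
        by (simp add: abs_if)
      then have "(norm (u x))^2 \<le> 2 * (norm (\<phi> n x - u x))^2 + 2 * (norm (\<phi> n x))^2"
        by (rule sq_tri) auto
      then show "(u x)^2 \<le> 2 * (\<phi> n x - u x)^2 + 2 * (\<phi> n x)^2" by simp
    next
      show "(\<lambda>x. (\<phi> n x - u x)^2) \<in> borel_measurable N" using uM \<phi>M by measurable
      show "(\<lambda>x. (\<phi> n x)^2) \<in> borel_measurable N" using \<phi>M by measurable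
    qed (simp, simp)
    have 2: "(\<integral>\<^sup>+x. ennreal ((norm (\<psi> n x))^2) \<partial>N) \<le> 2 * B n + 2 * (\<integral>\<^sup>+x. ennreal ((norm (g x))^2) \<partial>N)"
      unfolding B_def
    proof (rule nn_bound2)
      fix x
      have "norm (\<psi> n x) = norm ((\<psi> n x - g x) + g x)" by simp
      also have "\<dots> \<le> norm (\<psi> n x - g x) + norm (g x)" by (rule norm_triangle_ineq)
      finally have "norm (\<psi> n x) \<le> norm (\<psi> n x - g x) + norm (g x)" .
      then show "(norm (\<psi> n x))^2 \<le> 2 * (norm (\<psi> n x - g x))^2 + 2 * (norm (g x))^2"
        by (rule sq_tri) auto
    next
      show "(\<lambda>x. (norm (\<psi> n x - g x))^2) \<in> borel_measurable N" using gM \<psi>M by measurable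
      show "(\<lambda>x. (norm (g x))^2) \<in> borel_measurable N" using gM by measurable
    qed (simp, simp)
    then have "(\<integral>\<^sup>+x. ennreal ((norm (\<psi> n x))^2) \<partial>N) \<le> 2 * B n" using G0 by simp
    then have "ennreal C * (\<integral>\<^sup>+x. ennreal ((norm (\<psi> n x))^2) \<partial>N) \<le> ennreal C * (2 * B n)"
      by (rule mult_left_mono) simp
    then have 3: "(\<integral>\<^sup>+x. ennreal ((\<phi> n x)^2) \<partial>N) \<le> ennreal C * (2 * B n)"
      by (rule order_trans[OF P[of n]])
    have "2 * (\<integral>\<^sup>+x. ennreal ((\<phi> n x)^2) \<partial>N) \<le> 2 * (ennreal C * (2 * B n))"
      using 3 by (rule mult_left_mono) simp
    then have "2 * A n + 2 * (\<integral>\<^sup>+x. ennreal ((\<phi> n x)^2) \<partial>N) \<le> 2 * A n + 2 * (ennreal C * (2 * B n))"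
      by (rule add_left_mono)
    with 1 show ?thesis by (rule order_trans)
  qed
  have lim: "(\<lambda>n. 2 * A n + 2 * (ennreal C * (2 * B n))) \<longlonglongrightarrow> 2 * 0 + 2 * (ennreal C * (2 * 0))"
    using Alim Blim unfolding A_def[abs_def] B_def[abs_def]
    by (intro tendsto_add ennreal_tendsto_cmult) auto
  have "(\<integral>\<^sup>+x. ennreal ((u x)^2) \<partial>N) \<le> 0"
    using LIMSEQ_le_const[OF lim] le by auto
  then show ?thesis by simp
qed


theorem proposition3p7:
  fixes \<Omega> :: "'a::euclidean_space set" and \<mu> :: "'a measure" and u :: "'a \<Rightarrow> real"
  assumes "open \<Omega>" and "connected \<Omega>" and "\<Omega> \<noteq> {}" and "bounded \<Omega>"
    and "sets \<mu> = sets borel" and "finite_measure \<mu>"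
    and "measure_support \<mu> \<subseteq> closure \<Omega>" and "emeasure \<mu> \<Omega> > 0"
    and "MPI \<Omega> \<mu>"
    and "continuous_on \<Omega> u"
    and "mu_harmonic \<Omega> \<mu> u"
    and "\<And>x. x \<in> frontier \<Omega> \<Longrightarrow> (u \<longlongrightarrow> 0) (at x within \<Omega>)"
  shows "\<forall>x\<in>\<Omega>. u x = 0"
proof -
  from assms(11) obtain g where nl: "neg_mu_laplacian \<Omega> \<mu> u g (\<lambda>_. 0)"
    unfolding mu_harmonic_def by blast
  then have perp: "in_N_perp \<Omega> \<mu> u g"
    and harm: "\<And>\<psi>. test_fun \<Omega> \<psi> \<Longrightarrow> (LINT x:\<Omega>|lebesgue. g x \<bullet> grad \<psi> x) = (LINT x:\<Omega>|\<mu>. 0 * \<psi> x)"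
    unfolding neg_mu_laplacian_def by auto
  from perp obtain \<phi> where ap: "H01_approx \<Omega> u g \<phi>" unfolding in_N_perp_def H01_def by blast
  then have mu: "(\<lambda>x. indicator \<Omega> x * u x) \<in> borel_measurable lebesgue"
    and mg: "(\<lambda>x. indicator \<Omega> x *\<^sub>R g x) \<in> borel_measurable lebesgue"
    and tf: "\<And>n. test_fun \<Omega> (\<phi> n)"
    and Alim0: "(\<lambda>n. \<integral>\<^sup>+x\<in>\<Omega>. ennreal ((\<phi> n x - u x)\<^sup>2) \<partial>lebesgue) \<longlonglongrightarrow> 0"
    and Blim0: "(\<lambda>n. \<integral>\<^sup>+x\<in>\<Omega>. ennreal ((norm (grad (\<phi> n) x - g x))\<^sup>2) \<partial>lebesgue) \<longlonglongrightarrow> 0"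
    unfolding H01_approx_def by auto
  define N where "N = restrict_space lebesgue \<Omega>"
  have \<Omega>s: "\<Omega> \<in> sets lebesgue" using \<open>open \<Omega>\<close> by simp
  have spN: "space N = \<Omega>" unfolding N_def by simp
  have nnconv: "\<And>f. (\<integral>\<^sup>+x\<in>\<Omega>. f x \<partial>lebesgue) = (\<integral>\<^sup>+x. f x \<partial>N)"
    unfolding N_def using \<Omega>s by (simp add: nn_integral_restrict_space)
  have uN: "u \<in> borel_measurable N"
  proof -
    have "(\<lambda>x. indicator \<Omega> x * u x) \<in> borel_measurable N"
      unfolding N_def by (rule measurable_restrict_space1[OF mu])
    moreover have "\<And>w. w \<in> space N \<Longrightarrow> indicator \<Omega> w * u w = u w" unfolding spN by simp
    then have "((\<lambda>x. indicator \<Omega> x * u x) \<in> borel_measurable N) = (u \<in> borel_measurable N)"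
      by (rule measurable_cong)
    ultimately show ?thesis by simp
  qed
  have gN: "g \<in> borel_measurable N"
  proof -
    have "(\<lambda>x. indicator \<Omega> x *\<^sub>R g x) \<in> borel_measurable N"
      unfolding N_def by (rule measurable_restrict_space1[OF mg])
    moreover have "\<And>w. w \<in> space N \<Longrightarrow> indicator \<Omega> w *\<^sub>R g w = g w" unfolding spN by simp
    then have "((\<lambda>x. indicator \<Omega> x *\<^sub>R g x) \<in> borel_measurable N) = (g \<in> borel_measurable N)"
      by (rule measurable_cong)
    ultimately show ?thesis by simp
  qed
  have sm: "smooth_fun (\<phi> n)" for n using tf[of n] test_fun_def by auto
  have \<phi>N: "\<phi> n \<in> borel_measurable N" for n
    unfolding N_def
    by (rule continuous_imp_measurable_on_sets_lebesgue[OF continuous_on_subset[OF smooth_cont[OF sm]] \<Omega>s]) simp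
  have \<psi>N: "grad (\<phi> n) \<in> borel_measurable N" for n
    unfolding N_def
    by (rule continuous_imp_measurable_on_sets_lebesgue[OF continuous_on_subset[OF smooth_grad_cont[OF sm]] \<Omega>s]) simp
  obtain R where R: "R > 0" "\<Omega> \<subseteq> ball 0 R"
    using bounded_subset_ballD[OF \<open>bounded \<Omega>\<close>, of 0] by blast
  have sub: "\<Omega> \<subseteq> cbox ((-R) *\<^sub>R One) (R *\<^sub>R One)"
  proof
    fix x assume "x \<in> \<Omega>"
    then have "norm x \<le> R" using R by (auto simp: subset_iff)
    then show "x \<in> cbox ((-R) *\<^sub>R One) (R *\<^sub>R One)" by (rule norm_in_box)
  qed
  have \<psi>fin: "(\<integral>\<^sup>+x. ennreal ((norm (grad (\<phi> n) x))^2) \<partial>N) < \<infinity>" for n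
  proof -
    have "(\<integral>\<^sup>+x\<in>\<Omega>. ennreal ((norm (grad (\<phi> n) x))^2) \<partial>lebesgue) = ennreal (integral (cbox ((-R) *\<^sub>R One) (R *\<^sub>R One)) (\<lambda>x. (norm (grad (\<phi> n) x))^2))"
      by (rule nn_conv[OF _ _ _ sub]) (auto intro!: continuous_intros smooth_grad_cont[OF sm] simp: test_grad_zero[OF tf])
    then show ?thesis unfolding nnconv by simp
  qed
  have orth: "integral\<^sup>L N (\<lambda>x. g x \<bullet> grad (\<phi> n) x) = 0" for n
  proof -
    have "integral\<^sup>L N (\<lambda>x. g x \<bullet> grad (\<phi> n) x) = (LINT x:\<Omega>|lebesgue. g x \<bullet> grad (\<phi> n) x)"
      unfolding N_def set_lebesgue_integral_def using \<Omega>s by (simp add: integral_restrict_space)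
    also have "\<dots> = (LINT x:\<Omega>|\<mu>. 0 * \<phi> n x)" by (rule harm[OF tf])
    also have "\<dots> = 0" by (simp add: set_lebesgue_integral_def)
    finally show ?thesis .
  qed
  have G0: "(\<integral>\<^sup>+x. ennreal ((norm (g x))^2) \<partial>N) = 0"
  proof (rule g_zero[OF gN \<psi>N \<psi>fin _ orth])
    show "(\<lambda>n. \<integral>\<^sup>+x. ennreal ((norm (grad (\<phi> n) x - g x))^2) \<partial>N) \<longlonglongrightarrow> 0"
      using Blim0 unfolding nnconv .
  qed
  have U0: "(\<integral>\<^sup>+x. ennreal ((u x)^2) \<partial>N) = 0"
  proof (rule u_zero[OF uN \<phi>N \<psi>N gN _ _ G0])
    show "(\<lambda>n. \<integral>\<^sup>+x. ennreal ((\<phi> n x - u x)^2) \<partial>N) \<longlonglongrightarrow> 0"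
      using Alim0 unfolding nnconv .
    show "(\<lambda>n. \<integral>\<^sup>+x. ennreal ((norm (grad (\<phi> n) x - g x))^2) \<partial>N) \<longlonglongrightarrow> 0"
      using Blim0 unfolding nnconv .
    show "(\<integral>\<^sup>+x. ennreal ((\<phi> n x)^2) \<partial>N) \<le> ennreal (4*R^2/(real DIM('a))^2) * (\<integral>\<^sup>+x. ennreal ((norm (grad (\<phi> n) x))^2) \<partial>N)" for n
      using poincare_nn[OF tf R] unfolding nnconv .
  qed
  have "AE x in N. ennreal ((u x)^2) = 0"
    using U0 uN by (subst nn_integral_0_iff_AE[symmetric]) auto
  then have AEu: "AE x in lebesgue. x \<in> \<Omega> \<longrightarrow> u x = 0"
    unfolding N_def using \<Omega>s by (subst (asm) AE_restrict_space_iff) auto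
  show ?thesis
  proof (rule ccontr)
    assume "\<not> (\<forall>x\<in>\<Omega>. u x = 0)"
    then obtain x0 where x0: "x0 \<in> \<Omega>" "u x0 \<noteq> 0" by blast
    define S where "S = \<Omega> \<inter> u -` (- {0})"
    have "open S" unfolding S_def
      by (rule continuous_open_preimage[OF assms(10) assms(1)]) auto
    moreover have "AE x \<in> S in lebesgue. x \<in> {}"
      using AEu by eventually_elim (auto simp: S_def)
    moreover have "x0 \<in> S" using x0 by (auto simp: S_def)
    ultimately have "x0 \<in> {}" by (rule mem_closed_if_AE_lebesgue_open[OF _ closed_empty])
    then show False by simp
  qed
qed

end
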